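(* Let $\mathbb{K}$ be a field, $G=\operatorname{SL}_2(\mathbb{K})$, and $V$ a $G$-module of length $n$. Then the subgroup $\langle G\cdot (Z_1(V) \cap w\cdot Z_{n-1}(V))\rangle$ of $V$ generated by the $G$-translates of $Z_1(V) \cap w\cdot Z_{n-1}(V)$ has length at most $n-1$ (indeed it is contained in $Z_{n-1}(V)$).
   Context: $G = \operatorname{SL}_2(\mathbb{K})$ is regarded as an abstract group and a $G$-module is a $\mathbb{Z}[G]$-module. Let $w = \begin{pmatrix}0 & 1 \\ -1 & 0 \end{pmatrix}$ and $U = \left\{\begin{pmatrix}1 & \lambda \\ 0 & 1\end{pmatrix}:\lambda\in\mathbb{K}\right\}$. For a $G$-module $V$ set $Z_0(V) = 0$ and define $Z_{k+1}(V)$ by $Z_{k+1}(V)/Z_k(V) = C_{V/Z_k(V)}(U)$ (the fixed points of $U$ in the quotient). The length of $V$ (or of a $U$-invariant subgroup) is the least $k$ with $Z_k = $ the whole module, i.e. the least $k$ such that $k$-fold iterated commutators with $U$ vanish. *)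

theory Defs
  imports "HOL-Analysis.Analysis"
begin

definition mat2 :: "'k::field \<Rightarrow> 'k \<Rightarrow> 'k \<Rightarrow> 'k \<Rightarrow> 'k^2^2" where
  "mat2 a b c d = vector [vector [a, b], vector [c, d]]"

definition SL2 :: "('k::field^2^2) set" where
  "SL2 = {A. det A = 1}"

definition wmat :: "'k::field^2^2" where
  "wmat = mat2 0 1 (-1) 0"

definition Ugrp :: "('k::field^2^2) set" where
  "Ugrp = {mat2 1 l 0 1 | l. True}"

text \<open>A G-module (Z[G]-module) structure on an abelian group 'v: a group action of
  SL_2(K) (as an abstract group) by additive maps.\<close>
definition SL2_module :: "('k::field^2^2 \<Rightarrow> 'v::ab_group_add \<Rightarrow> 'v) \<Rightarrow> bool" where
  "SL2_module act \<longleftrightarrow>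
     (\<forall>g\<in>SL2. \<forall>x y. act g (x + y) = act g x + act g y) \<and>
     (\<forall>x. act (mat 1) x = x) \<and>
     (\<forall>g\<in>SL2. \<forall>h\<in>SL2. \<forall>x. act (g ** h) x = act g (act h x))"

text \<open>Z_k(M) for a U-invariant subgroup M: Z_0 = 0, and Z_{k+1}/Z_k = C_{M/Z_k}(U).\<close>
fun Zser :: "('k::field^2^2 \<Rightarrow> 'v::ab_group_add \<Rightarrow> 'v) \<Rightarrow> 'v set \<Rightarrow> nat \<Rightarrow> 'v set" where
  "Zser act M 0 = {0}"
| "Zser act M (Suc k) = {x \<in> M. \<forall>u\<in>Ugrp. act u x - x \<in> Zser act M k}"

definition gen_subgroup :: "'v::ab_group_add set \<Rightarrow> 'v set" where
  "gen_subgroup S = \<Inter>{H. 0 \<in> H \<and> (\<forall>x\<in>H. \<forall>y\<in>H. x - y \<in> H) \<and> S \<subseteq> H}"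

end

theory Submission imports Defs begin

lemma mat2_nth: "mat2 a b c d $ 1 $ 1 = a" "mat2 a b c d $ 1 $ 2 = b" "mat2 a b c d $ 2 $ 1 = c" "mat2 a b c d $ 2 $ 2 = d"
  by (simp_all add: mat2_def)

lemma mat2_eq: "mat2 a b c d = mat2 a' b' c' d' \<longleftrightarrow> a = a' \<and> b = b' \<and> c = c' \<and> d = d'"
  by (auto simp: vec_eq_iff forall_2 mat2_nth)

lemma mat2_mult: "mat2 a b c d ** mat2 e f g h = mat2 (a*e+b*g) (a*f+b*h) (c*e+d*g) (c*f+d*h)"
  by (simp add: vec_eq_iff forall_2 mat2_nth matrix_matrix_mult_def sum_2)

lemma mat2_det: "det (mat2 a b c d) = a*d - b*c"
  by (simp add: det_2 mat2_nth)

lemma mat2_all: "(A::'k::field^2^2) = mat2 (A$1$1) (A$1$2) (A$2$1) (A$2$2)"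
  by (simp add: vec_eq_iff forall_2 mat2_nth)

lemma mat2_one: "(mat 1 :: 'k::field^2^2) = mat2 1 0 0 1"
  by (simp add: vec_eq_iff forall_2 mat2_nth mat_def)

lemma SL2_mat2: "mat2 a b c d \<in> SL2 \<longleftrightarrow> a*d - b*c = 1"
  by (simp add: SL2_def mat2_det)

lemma SL2_mult: "g \<in> SL2 \<Longrightarrow> h \<in> SL2 \<Longrightarrow> g ** h \<in> SL2"
  by (simp add: SL2_def det_mul)

lemma Ugrp_SL2: "u \<in> Ugrp \<Longrightarrow> u \<in> SL2"
  by (auto simp: Ugrp_def SL2_mat2)

context
  fixes act :: "'k::field^2^2 \<Rightarrow> 'v::ab_group_add \<Rightarrow> 'v"
  assumes M: "SL2_module act"
begin

lemma act_add: "g \<in> SL2 \<Longrightarrow> act g (x + y) = act g x + act g y"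
  using M by (simp add: SL2_module_def)

lemma act_mult: "g \<in> SL2 \<Longrightarrow> h \<in> SL2 \<Longrightarrow> act (g ** h) x = act g (act h x)"
  using M by (simp add: SL2_module_def)

lemma act_0: "g \<in> SL2 \<Longrightarrow> act g 0 = 0"
  using act_add[of g 0 0] by simp

lemma act_diff: "g \<in> SL2 \<Longrightarrow> act g (x - y) = act g x - act g y"
proof -
  assume g: "g \<in> SL2"
  have "act g (x - y) + act g y = act g x" using act_add[OF g, of "x - y" y] by simp
  then show ?thesis by (simp add: eq_diff_eq)
qed

lemma Z_sub: "0 \<in> Zser act UNIV k \<and> (\<forall>x\<in>Zser act UNIV k. \<forall>y\<in>Zser act UNIV k. x - y \<in> Zser act UNIV k)"
proof (induction k)
  case 0 then show ?case by simp
next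
  case (Suc k)
  have a: "act u (x - y) - (x - y) = (act u x - x) - (act u y - y)" if "u \<in> Ugrp" for u and x y :: 'v
    using act_diff[OF Ugrp_SL2[OF that]] by (simp add: algebra_simps)
  show ?case using Suc by (auto simp: act_0 Ugrp_SL2 a)
qed

lemma Z_mono: "Zser act UNIV k \<subseteq> Zser act UNIV (Suc k)"
proof (induction k)
  case 0 then show ?case by (auto simp: act_0 Ugrp_SL2)
next
  case (Suc k) then show ?case by auto
qed

lemma Z_mono': "k \<le> m \<Longrightarrow> Zser act UNIV k \<subseteq> Zser act UNIV m"
  by (induction m) (use Z_mono le_Suc_eq in blast)+

lemma Z_inv:
  assumes g: "g \<in> SL2" and N: "\<And>u::'k^2^2. u \<in> Ugrp \<Longrightarrow> \<exists>u'\<in>Ugrp. u ** g = g ** u'"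
  shows "x \<in> Zser act UNIV k \<Longrightarrow> act g x \<in> Zser act UNIV k"
proof (induction k arbitrary: x)
  case 0 then show ?case by (simp add: act_0 g)
next
  case (Suc k)
  show ?case
  proof (simp, intro ballI)
    fix u :: "'k^2^2" assume u: "u \<in> Ugrp"
    then obtain u' where u': "u' \<in> Ugrp" "u ** g = g ** u'" using N by blast
    have "act u (act g x) = act g (act u' x)"
      using act_mult[OF Ugrp_SL2[OF u] g] act_mult[OF g Ugrp_SL2[OF u'(1)]] u'(2) by simp
    then have "act u (act g x) - act g x = act g (act u' x - x)" by (simp add: act_diff g)
    moreover have "act u' x - x \<in> Zser act UNIV k" using Suc.prems u' by simp
    ultimately show "act u (act g x) - act g x \<in> Zser act UNIV k" using Suc.IH by simp
  qed
qed

lemma Z_inv_U: "u \<in> Ugrp \<Longrightarrow> x \<in> Zser act UNIV k \<Longrightarrow> act u x \<in> Zser act UNIV k"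
proof (rule Z_inv)
  fix v :: "'k^2^2" assume "u \<in> Ugrp" "v \<in> Ugrp"
  then obtain l m where "u = mat2 1 l 0 1" "v = mat2 1 m 0 1" by (auto simp: Ugrp_def)
  then have "v ** u = u ** v" by (simp add: mat2_mult add.commute)
  then show "\<exists>u'\<in>Ugrp. v ** u = u ** u'" using \<open>v \<in> Ugrp\<close> by blast
qed (auto simp: Ugrp_SL2)

lemma Z_inv_T: "a \<noteq> 0 \<Longrightarrow> x \<in> Zser act UNIV k \<Longrightarrow> act (mat2 a 0 0 (inverse a)) x \<in> Zser act UNIV k"
proof (rule Z_inv)
  fix v :: "'k^2^2" assume a: "a \<noteq> 0" and "v \<in> Ugrp"
  then obtain m where v: "v = mat2 1 m 0 1" by (auto simp: Ugrp_def)
  have "v ** mat2 a 0 0 (inverse a) = mat2 a 0 0 (inverse a) ** mat2 1 (m / a^2) 0 1"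
    using a by (simp add: v mat2_mult mat2_eq field_simps power2_eq_square)
  moreover have "mat2 1 (m / a^2) 0 1 \<in> Ugrp" by (auto simp: Ugrp_def)
  ultimately show "\<exists>u'\<in>Ugrp. v ** mat2 a 0 0 (inverse a) = mat2 a 0 0 (inverse a) ** u'" by blast
qed (auto simp: SL2_mat2)

lemma Z_inv_negI: "x \<in> Zser act UNIV k \<Longrightarrow> act (mat2 (-1) 0 0 (-1)) x \<in> Zser act UNIV k"
proof (rule Z_inv)
  fix v :: "'k^2^2" assume "v \<in> Ugrp"
  then obtain m where v: "v = mat2 1 m 0 1" by (auto simp: Ugrp_def)
  have "v ** mat2 (-1) 0 0 (-1) = mat2 (-1) 0 0 (-1) ** v"
    by (simp add: v mat2_mult)
  then show "\<exists>u'\<in>Ugrp. v ** mat2 (-1) 0 0 (-1) = mat2 (-1) 0 0 (-1) ** u'" using \<open>v \<in> Ugrp\<close> by blast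
qed (auto simp: SL2_mat2)

lemma key:
  assumes g: "g \<in> SL2" and x1: "x \<in> Zser act UNIV 1" and y: "y \<in> Zser act UNIV m"
    and xy: "x = act wmat y"
  shows "act g x \<in> Zser act UNIV m"
proof -
  define p where "p = g$1$1"
  define q where "q = g$1$2"
  define r where "r = g$2$1"
  define s where "s = g$2$2"
  have gm: "g = mat2 p q r s" unfolding p_def q_def r_def s_def by (rule mat2_all)
  have det: "p * s - q*r = 1" using g gm SL2_mat2 by metis
  have wS: "wmat \<in> SL2" by (simp add: wmat_def SL2_mat2)
  show ?thesis
  proof (cases "r = 0")
    case True
    then have ps: "p * s = 1" using det by simp
    then have p0: "p \<noteq> 0" by auto
    have sinv: "s = inverse p" using ps by (metis mult.commute inverse_unique)
    define t where "t = mat2 p 0 0 (inverse p)"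
    define u where "u = mat2 1 (q/p) 0 (1::'k)"
    have tS: "t \<in> SL2" using p0 by (simp add: t_def SL2_mat2)
    have uU: "u \<in> Ugrp" by (auto simp: u_def Ugrp_def)
    have gtu: "g = t ** u" using p0 True sinv by (simp add: gm t_def u_def mat2_mult mat2_eq)
    have "act u x - x \<in> Zser act UNIV 0" using x1 uU by simp
    then have "act u x = x" by simp
    then have "act g x = act t x" using gtu act_mult[OF tS Ugrp_SL2[OF uU]] by simp
    moreover have "act t x \<in> Zser act UNIV 1" using Z_inv_T[OF p0 x1] by (simp add: t_def)
    moreover have "m = 0 \<Longrightarrow> x = 0" using y xy act_0[OF wS] by simp
    ultimately show ?thesis using Z_mono'[of 1 m] act_0[OF g]
      by (cases "m = 0") auto
  next
    case False
    define a where "a = - r"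
    have a0: "a \<noteq> 0" using False by (simp add: a_def)
    define u where "u = mat2 1 (p/r) 0 (1::'k)"
    define t where "t = mat2 a 0 0 (inverse a)"
    define u' where "u' = mat2 1 (s/r) 0 (1::'k)"
    define t2 where "t2 = mat2 (inverse a) 0 0 (inverse (inverse a))"
    define nI where "nI = mat2 (-1) 0 0 (-1::'k)"
    have uU: "u \<in> Ugrp" by (auto simp: u_def Ugrp_def)
    have u'U: "u' \<in> Ugrp" by (auto simp: u'_def Ugrp_def)
    have tS: "t \<in> SL2" using a0 by (simp add: t_def SL2_mat2)
    have t2S: "t2 \<in> SL2" using a0 by (simp add: t2_def SL2_mat2)
    have nS: "nI \<in> SL2" by (simp add: nI_def SL2_mat2)
    have uS: "u \<in> SL2" "u' \<in> SL2" using uU u'U Ugrp_SL2 by auto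
    have qq: "q = (p * s - 1)/r" using det False by (simp add: field_simps)
    have gdec: "g = u ** (wmat ** (t ** u'))"
      unfolding gm u_def wmat_def t_def u'_def a_def mat2_mult mat2_eq
      using False det by (simp add: inverse_eq_divide) (simp add: field_simps)
    have tw: "t ** wmat = wmat ** t2"
      using a0 by (simp add: t_def t2_def wmat_def mat2_mult mat2_eq)
    have ww: "wmat ** wmat = nI" by (simp add: wmat_def nI_def mat2_mult mat2_eq)
    have "act u' x - x \<in> Zser act UNIV 0" using x1 u'U by simp
    then have ux: "act u' x = x" by simp
    have "act g x = act u (act wmat (act t x))"
      using gdec ux by (simp add: act_mult uS wS tS SL2_mult)
    also have "act t x = act wmat (act t2 y)"
      using xy tw act_mult[OF tS wS] act_mult[OF wS t2S] by simp
    also have "act wmat (act wmat (act t2 y)) = act nI (act t2 y)"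
      using ww act_mult[OF wS wS] by simp
    finally have e: "act g x = act u (act nI (act t2 y))" .
    have "act t2 y \<in> Zser act UNIV m" using Z_inv_T[of "inverse a" y m] a0 y by (simp add: t2_def)
    then have "act nI (act t2 y) \<in> Zser act UNIV m" using Z_inv_negI by (simp add: nI_def)
    then show ?thesis using e Z_inv_U[OF uU] by simp
  qed
qed

end

theorem mainTheorem8:
  fixes act :: "'k::field^2^2 \<Rightarrow> 'v::ab_group_add \<Rightarrow> 'v"
    and n :: nat
  assumes "SL2_module act"
    and "Zser act UNIV n = UNIV"
    and "\<forall>k<n. Zser act UNIV k \<noteq> UNIV"
  defines "W \<equiv> gen_subgroup (\<Union>g\<in>SL2. act g ` (Zser act UNIV 1 \<inter> act wmat ` Zser act UNIV (n - 1)))"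
  shows "(\<exists>k\<le>n - 1. Zser act W k = W) \<and> W \<subseteq> Zser act UNIV (n - 1)"
proof -
  note M = assms(1)
  define T where "T = (\<Union>g\<in>SL2. act g ` (Zser act UNIV 1 \<inter> act wmat ` Zser act UNIV (n - 1)))"
  have Wd: "W = \<Inter>{H. 0 \<in> H \<and> (\<forall>x\<in>H. \<forall>y\<in>H. x - y \<in> H) \<and> T \<subseteq> H}"
    by (simp add: W_def T_def gen_subgroup_def)
  have T_Z: "T \<subseteq> Zser act UNIV (n - 1)"
  proof
    fix z assume "z \<in> T"
    then obtain g x y where "g \<in> SL2" "x \<in> Zser act UNIV 1" "y \<in> Zser act UNIV (n - 1)" "x = act wmat y" "z = act g x"
      unfolding T_def by blast
    then show "z \<in> Zser act UNIV (n - 1)" using key[OF M] by blast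
  qed
  have WZ: "W \<subseteq> Zser act UNIV (n - 1)"
    unfolding Wd by (rule Inter_lower) (use Z_sub[OF M] T_Z in simp)
  have W0: "0 \<in> W" unfolding Wd by blast
  have Wdiff: "x \<in> W \<Longrightarrow> y \<in> W \<Longrightarrow> x - y \<in> W" for x y unfolding Wd by blast
  have Tinv: "act h t \<in> T" if h: "h \<in> SL2" and t: "t \<in> T" for h t
  proof -
    obtain g x where g: "g \<in> SL2" and x: "x \<in> Zser act UNIV 1 \<inter> act wmat ` Zser act UNIV (n - 1)" and tx: "t = act g x"
      using t unfolding T_def by blast
    have "act h t = act (h ** g) x" using act_mult[OF M h g] tx by simp
    moreover have "h ** g \<in> SL2" using SL2_mult h g by blast
    ultimately show ?thesis unfolding T_def using x by blast
  qed
  have Winv: "act h x \<in> W" if h: "h \<in> SL2" and x: "x \<in> W" for h x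
  proof -
    have "act h x \<in> H" if H: "0 \<in> H" "\<forall>x\<in>H. \<forall>y\<in>H. x - y \<in> H" "T \<subseteq> H" for H
    proof -
      let ?H = "{y. act h y \<in> H}"
      have "0 \<in> ?H" using H(1) act_0[OF M h] by simp
      moreover have "\<forall>x\<in>?H. \<forall>y\<in>?H. x - y \<in> ?H" using H(2) act_diff[OF M h] by simp
      moreover have "T \<subseteq> ?H" using H(3) Tinv[OF h] by blast
      ultimately have "W \<subseteq> ?H" unfolding Wd by (intro Inter_lower) simp
      then show ?thesis using x by blast
    qed
    then show ?thesis unfolding Wd by blast
  qed
  have low: "W \<inter> Zser act UNIV k \<subseteq> Zser act W k" for k
  proof (induction k)
    case 0 then show ?case by simp
  next
    case (Suc k)
    show ?case
    proof
      fix x assume x: "x \<in> W \<inter> Zser act UNIV (Suc k)"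
      have "act u x - x \<in> Zser act W k" if u: "u \<in> Ugrp" for u
      proof -
        have "act u x \<in> W" using Winv Ugrp_SL2[OF u] x by blast
        then have "act u x - x \<in> W" using Wdiff x by blast
        moreover have "act u x - x \<in> Zser act UNIV k" using x u by simp
        ultimately show ?thesis using Suc.IH by blast
      qed
      then show "x \<in> Zser act W (Suc k)" using x by simp
    qed
  qed
  have up: "Zser act W k \<subseteq> W" for k
    by (cases k) (auto simp: W0)
  have "Zser act W (n - 1) = W" using low[of "n-1"] up[of "n-1"] WZ by blast
  then show ?thesis using WZ by blast
qed

end
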